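(* Let $D\subset\mathbb{R}^3$ be a bounded domain with Lipschitz boundary $S$, let $k>0$ be a constant, and let $a\geq 0$. Let $f:\mathbb{R}\to\mathbb{R}$ be continuous on $\{u:|u|\geq a\}$ and, on $\{u:|u|\leq a\}$, bounded and piecewise-continuous with at most finitely many discontinuity points $u_j$ at which $f(u_j\pm 0)$ exist. If $u f(u)\geq 0$ for all $|u|\geq a$, then every solution $u\in H^2(D)\cap\overset{\circ}{H}{}^1(D)$ of the problem $$(-\Delta+k^2)u+f(u)=0 \text{ in } D,\qquad u=0 \text{ on } S,$$ satisfies $|u(x)|\leq a$ for all $x\in D$.
   Context: $H^2(D)$ is the usual Sobolev space and $\overset{\circ}{H}{}^1(D)$ is the closure of $C_0^\infty(D)$ in the $H^1(D)$ norm. *)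

theory Defs
  imports "HOL-Analysis.Analysis"
begin

type_synonym R3 = "real ^ 3"

definition pd :: "3 \<Rightarrow> (R3 \<Rightarrow> real) \<Rightarrow> R3 \<Rightarrow> real" where
  "pd i \<phi> x = deriv (\<lambda>t. \<phi> (x + t *\<^sub>R axis i 1)) 0"

fun iterpd :: "3 list \<Rightarrow> (R3 \<Rightarrow> real) \<Rightarrow> R3 \<Rightarrow> real" where
  "iterpd [] \<phi> = \<phi>"
| "iterpd (i # is) \<phi> = pd i (iterpd is \<phi>)"

definition smooth_fun :: "(R3 \<Rightarrow> real) \<Rightarrow> bool" where
  "smooth_fun \<phi> \<longleftrightarrow> (\<forall>is. iterpd is \<phi> differentiable_on UNIV)"

definition test_fun :: "R3 set \<Rightarrow> (R3 \<Rightarrow> real) \<Rightarrow> bool" where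
  "test_fun D \<phi> \<longleftrightarrow> smooth_fun \<phi> \<and> compact (closure {x. \<phi> x \<noteq> 0})
      \<and> closure {x. \<phi> x \<noteq> 0} \<subseteq> D"

definition L2 :: "R3 set \<Rightarrow> (R3 \<Rightarrow> real) \<Rightarrow> bool" where
  "L2 D u \<longleftrightarrow> (\<lambda>x. indicator D x * u x) \<in> borel_measurable lebesgue
      \<and> set_integrable lebesgue D (\<lambda>x. (u x)\<^sup>2)"

definition weak_pd :: "R3 set \<Rightarrow> 3 \<Rightarrow> (R3 \<Rightarrow> real) \<Rightarrow> (R3 \<Rightarrow> real) \<Rightarrow> bool" where
  "weak_pd D i u g \<longleftrightarrow>
     set_integrable lebesgue D u \<and> set_integrable lebesgue D g \<and>
     (\<forall>\<phi>. test_fun D \<phi> \<longrightarrow>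
        (LINT x:D|lebesgue. u x * pd i \<phi> x) = - (LINT x:D|lebesgue. g x * \<phi> x))"

definition H1 :: "R3 set \<Rightarrow> (R3 \<Rightarrow> real) \<Rightarrow> bool" where
  "H1 D u \<longleftrightarrow> L2 D u \<and> (\<forall>i. \<exists>g. L2 D g \<and> weak_pd D i u g)"

definition H2 :: "R3 set \<Rightarrow> (R3 \<Rightarrow> real) \<Rightarrow> bool" where
  "H2 D u \<longleftrightarrow> L2 D u \<and> (\<exists>g G. \<forall>i. L2 D (g i) \<and> weak_pd D i u (g i)
      \<and> (\<forall>j. L2 D (G i j) \<and> weak_pd D j (g i) (G i j)))"

text \<open>Closure of C_0^infinity(D) in the H^1(D) norm.\<close>
definition H01 :: "R3 set \<Rightarrow> (R3 \<Rightarrow> real) \<Rightarrow> bool" where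
  "H01 D u \<longleftrightarrow> L2 D u \<and> (\<exists>g. (\<forall>i. L2 D (g i) \<and> weak_pd D i u (g i)) \<and>
     (\<exists>\<phi> :: nat \<Rightarrow> R3 \<Rightarrow> real. (\<forall>n. test_fun D (\<phi> n)) \<and>
        (\<lambda>n. LINT x:D|lebesgue. (u x - \<phi> n x)\<^sup>2) \<longlonglongrightarrow> 0 \<and>
        (\<forall>i. (\<lambda>n. LINT x:D|lebesgue. (g i x - pd i (\<phi> n) x)\<^sup>2) \<longlonglongrightarrow> 0)))"

definition lipschitz_boundary :: "R3 set \<Rightarrow> bool" where
  "lipschitz_boundary D \<longleftrightarrow> (\<forall>p\<in>frontier D. \<exists>r>0. \<exists>(R :: R3 \<Rightarrow> R3) (h :: real \<Rightarrow> real \<Rightarrow> real) (L :: real).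
     orthogonal_transformation R \<and>
     (\<forall>y1 y2 z1 z2. \<bar>h y1 y2 - h z1 z2\<bar> \<le> L * sqrt ((y1 - z1)\<^sup>2 + (y2 - z2)\<^sup>2)) \<and>
     D \<inter> ball p r = {x \<in> ball p r. (R (x - p)) $ 3 < h ((R (x - p)) $ 1) ((R (x - p)) $ 2)})"

definition solves_eq :: "R3 set \<Rightarrow> real \<Rightarrow> (real \<Rightarrow> real) \<Rightarrow> (R3 \<Rightarrow> real) \<Rightarrow> bool" where
  "solves_eq D k f u \<longleftrightarrow> (\<exists>g G. (\<forall>i. weak_pd D i u (g i) \<and> (\<forall>j. weak_pd D j (g i) (G i j))) \<and>
     (AE x in lebesgue. x \<in> D \<longrightarrow> - (\<Sum>i\<in>UNIV. G i i x) + k\<^sup>2 * u x + f (u x) = 0))"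

end

theory Submission
  imports Defs
begin

lemma iterpd_append: "iterpd is (iterpd js \<phi>) = iterpd (is @ js) \<phi>"
  by (induction "is") auto

lemma smooth_pd: "smooth_fun \<phi> \<Longrightarrow> smooth_fun (pd i \<phi>)"
  unfolding smooth_fun_def
proof
  fix "is" assume "\<forall>is. iterpd is \<phi> differentiable_on UNIV"
  then show "iterpd is (pd i \<phi>) differentiable_on UNIV"
    using iterpd_append[of "is" "[i]" \<phi>] by simp
qed

lemma smooth_diff: "smooth_fun \<phi> \<Longrightarrow> \<phi> differentiable at x"
  unfolding smooth_fun_def using differentiable_on_def
  by (metis UNIV_I iterpd.simps(1) differentiable_on_eq_differentiable_at open_UNIV)

lemma line_deriv:
  fixes h :: "R3 \<Rightarrow> real"
  assumes "h differentiable at x"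
  shows "((\<lambda>t. h (x + t *\<^sub>R axis i 1)) has_real_derivative pd i h x) (at 0)"
proof -
  have l: "(\<lambda>t::real. x + t *\<^sub>R axis i 1) differentiable at 0"
    by (intro derivative_intros) 
  have "(h \<circ> (\<lambda>t::real. x + t *\<^sub>R axis i 1)) differentiable at 0"
    by (rule differentiable_chain_at[OF l]) (simp add: assms)
  then have "(\<lambda>t. h (x + t *\<^sub>R axis i 1)) differentiable at 0" by (simp add: o_def)
  then show ?thesis unfolding pd_def using DERIV_deriv_iff_real_differentiable by blast
qed

inductive_set SC :: "(R3 \<Rightarrow> real) \<Rightarrow> (nat \<Rightarrow> real \<Rightarrow> real) \<Rightarrow> (R3 \<Rightarrow> real) set"
  for \<phi> Fk where
  b1: "iterpd is \<phi> \<in> SC \<phi> Fk"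
| b2: "(\<lambda>x. Fk k (\<phi> x)) \<in> SC \<phi> Fk"
| ad: "a \<in> SC \<phi> Fk \<Longrightarrow> b \<in> SC \<phi> Fk \<Longrightarrow> (\<lambda>x. a x + b x) \<in> SC \<phi> Fk"
| mu: "a \<in> SC \<phi> Fk \<Longrightarrow> b \<in> SC \<phi> Fk \<Longrightarrow> (\<lambda>x. a x * b x) \<in> SC \<phi> Fk"

lemma SC_diff:
  assumes sm: "smooth_fun \<phi>" and Fd: "\<And>k t. (Fk k has_real_derivative Fk (Suc k) t) (at t)"
  shows "h \<in> SC \<phi> Fk \<Longrightarrow> h differentiable at x"
proof (induction h rule: SC.induct)
  case (b1 "is")
  then show ?case using sm smooth_diff[of "iterpd is \<phi>"] unfolding smooth_fun_def
    by (metis smooth_fun_def iterpd_append append_Nil2 iterpd.simps(1) smooth_diff)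
next
  case (b2 k)
  have "Fk k differentiable at (\<phi> x)" using Fd real_differentiable_def
    by (metis DERIV_deriv_iff_real_differentiable DERIV_imp_deriv)
  then have "(Fk k \<circ> \<phi>) differentiable at x"
    by (intro differentiable_chain_at smooth_diff[OF sm])
  then show ?case by (simp add: o_def)
next
  case (ad a b) then show ?case by (intro differentiable_add)
next
  case (mu a b) then show ?case by (intro differentiable_mult)
qed

lemma SC_pd:
  assumes sm: "smooth_fun \<phi>" and Fd: "\<And>k t. (Fk k has_real_derivative Fk (Suc k) t) (at t)"
  shows "h \<in> SC \<phi> Fk \<Longrightarrow> \<exists>h'\<in>SC \<phi> Fk. \<forall>x. ((\<lambda>t. h (x + t *\<^sub>R axis i 1)) has_real_derivative h' x) (at 0)"
proof (induction h rule: SC.induct)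
  case (b1 "is")
  show ?case
  proof (intro bexI allI)
    fix x show "((\<lambda>t. iterpd is \<phi> (x + t *\<^sub>R axis i 1)) has_real_derivative iterpd (i # is) \<phi> x) (at 0)"
      using line_deriv[OF SC_diff[where Fk=Fk, OF sm Fd SC.b1]] by simp
  qed (rule SC.b1)
next
  case (b2 k)
  show ?case
  proof (intro bexI allI)
    fix x
    have d1: "((\<lambda>t. \<phi> (x + t *\<^sub>R axis i 1)) has_real_derivative iterpd [i] \<phi> x) (at 0)"
      using line_deriv[OF smooth_diff[OF sm]] by simp
    have d2: "(Fk k has_real_derivative Fk (Suc k) (\<phi> (x + 0 *\<^sub>R axis i 1))) (at (\<phi> (x + 0 *\<^sub>R axis i 1)))"
      by (rule Fd)
    show "((\<lambda>t. Fk k (\<phi> (x + t *\<^sub>R axis i 1))) has_real_derivative Fk (Suc k) (\<phi> x) * iterpd [i] \<phi> x) (at 0)"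
      using DERIV_chain2[OF d2 d1] by simp
  qed (intro SC.mu SC.b2 SC.b1)
next
  case (ad a b)
  then obtain a' b' where a': "a' \<in> SC \<phi> Fk" "\<forall>x. ((\<lambda>t. a (x + t *\<^sub>R axis i 1)) has_real_derivative a' x) (at 0)"
    and b': "b' \<in> SC \<phi> Fk" "\<forall>x. ((\<lambda>t. b (x + t *\<^sub>R axis i 1)) has_real_derivative b' x) (at 0)" by blast
  show ?case
    by (rule bexI[of _ "\<lambda>x. a' x + b' x"]) (use a' b' in \<open>auto intro!: SC.ad DERIV_add\<close>)
next
  case (mu a b)
  then obtain a' b' where a': "a' \<in> SC \<phi> Fk" "\<forall>x. ((\<lambda>t. a (x + t *\<^sub>R axis i 1)) has_real_derivative a' x) (at 0)"
    and b': "b' \<in> SC \<phi> Fk" "\<forall>x. ((\<lambda>t. b (x + t *\<^sub>R axis i 1)) has_real_derivative b' x) (at 0)" by blast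
  show ?case
  proof (rule bexI[of _ "\<lambda>x. a' x * b x + b' x * a x"], intro allI)
    fix x
    show "((\<lambda>t. a (x + t *\<^sub>R axis i 1) * b (x + t *\<^sub>R axis i 1)) has_real_derivative a' x * b x + b' x * a x) (at 0)"
      using DERIV_mult[OF a'(2)[rule_format, of x] b'(2)[rule_format, of x]] by simp
  qed (use a' b' mu in \<open>auto intro!: SC.ad SC.mu\<close>)
qed

lemma SC_pd_mem:
  assumes sm: "smooth_fun \<phi>" and Fd: "\<And>k t. (Fk k has_real_derivative Fk (Suc k) t) (at t)"
    and "h \<in> SC \<phi> Fk"
  shows "pd i h \<in> SC \<phi> Fk"
proof -
  obtain h' where h': "h' \<in> SC \<phi> Fk" "\<forall>x. ((\<lambda>t. h (x + t *\<^sub>R axis i 1)) has_real_derivative h' x) (at 0)"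
    using SC_pd[where Fk=Fk, OF sm Fd assms(3), of i] by blast
  have "pd i h = h'" unfolding pd_def using h'(2) DERIV_imp_deriv by blast
  then show ?thesis using h' by simp
qed

lemma smooth_comp:
  assumes sm: "smooth_fun \<phi>" and Fd: "\<And>k t. (Fk k has_real_derivative Fk (Suc k) t) (at t)"
  shows "smooth_fun (\<lambda>x. Fk 0 (\<phi> x))"
proof -
  have "iterpd is (\<lambda>x. Fk 0 (\<phi> x)) \<in> SC \<phi> Fk" for "is"
    by (induction "is") (auto intro: SC.b2 SC_pd_mem[where Fk=Fk, OF sm Fd])
  then show ?thesis unfolding smooth_fun_def
    using SC_diff[where Fk=Fk, OF sm Fd] by (simp add: differentiable_at_imp_differentiable_on)
qed

lemma pd_comp:
  assumes sm: "smooth_fun \<phi>" and Fd: "(F has_real_derivative F' (\<phi> x)) (at (\<phi> x))"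
  shows "pd i (\<lambda>x. F (\<phi> x)) x = F' (\<phi> x) * pd i \<phi> x"
proof -
  have d1: "((\<lambda>t. \<phi> (x + t *\<^sub>R axis i 1)) has_real_derivative pd i \<phi> x) (at 0)"
    using line_deriv[OF smooth_diff[OF sm]] by simp
  have d2: "(F has_real_derivative F' (\<phi> x)) (at (\<phi> (x + 0 *\<^sub>R axis i 1)))" using Fd by simp
  show ?thesis unfolding pd_def[of i "\<lambda>x. F (\<phi> x)"]
    using DERIV_chain2[OF d2 d1] by (intro DERIV_imp_deriv) simp
qed


lemma pd_zero_outside:
  assumes "x \<notin> closure {y. \<phi> y \<noteq> 0}"
  shows "pd i \<phi> x = 0"
proof -
  have "open (- closure {y. \<phi> y \<noteq> 0})" by auto
  then obtain e where e: "e > 0" "ball x e \<subseteq> - closure {y. \<phi> y \<noteq> 0}"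
    using assms open_contains_ball[of "- closure {y. \<phi> y \<noteq> 0}"] by auto
  then have z: "\<forall>y\<in>ball x e. \<phi> y = 0" using closure_subset[of "{y. \<phi> y \<noteq> 0}"] by blast
  have ev: "eventually (\<lambda>t. \<phi> (x + t *\<^sub>R axis i 1) = 0) (nhds (0::real))"
    unfolding eventually_nhds_metric
  proof (intro exI[of _ e] conjI allI impI)
    fix t :: real assume "dist t 0 < e"
    then have "x + t *\<^sub>R axis i 1 \<in> ball x e" by (simp add: dist_norm)
    then show "\<phi> (x + t *\<^sub>R axis i 1) = 0" using z by blast
  qed (use e in auto)
  have "((\<lambda>t. \<phi> (x + t *\<^sub>R axis i 1)) has_real_derivative 0) (at 0)"
    using DERIV_cong_ev[OF refl ev refl, THEN iffD2] by simp
  then show ?thesis unfolding pd_def by (rule DERIV_imp_deriv)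
qed

lemma supp_pd: "closure {x. pd i \<phi> x \<noteq> 0} \<subseteq> closure {x. \<phi> x \<noteq> 0}"
  by (rule closure_minimal) (use pd_zero_outside in auto)

lemma compact_sub: "compact K \<Longrightarrow> closure A \<subseteq> K \<Longrightarrow> compact (closure A)"
  by (metis closed_closure compact_Int_closed inf.absorb_iff2)

lemma test_pd: "test_fun D \<phi> \<Longrightarrow> test_fun D (pd i \<phi>)"
  unfolding test_fun_def using supp_pd[of i \<phi>] smooth_pd[of \<phi> i] compact_sub[of "closure {x. \<phi> x \<noteq> 0}" "{x. pd i \<phi> x \<noteq> 0}"] by (meson order_trans)

lemma test_comp:
  assumes "test_fun D \<phi>" "\<And>k t. (Fk k has_real_derivative Fk (Suc k) t) (at t)" "Fk 0 0 = 0"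
  shows "test_fun D (\<lambda>x. Fk 0 (\<phi> x))"
proof -
  have "{x. Fk 0 (\<phi> x) \<noteq> 0} \<subseteq> {x. \<phi> x \<noteq> 0}" using assms(3) by auto
  then have "closure {x. Fk 0 (\<phi> x) \<noteq> 0} \<subseteq> closure {x. \<phi> x \<noteq> 0}" by (rule closure_mono)
  then show ?thesis using assms(1) smooth_comp[where Fk=Fk, OF _ assms(2)] compact_sub
    unfolding test_fun_def by blast
qed

lemma smooth_cont: "smooth_fun \<phi> \<Longrightarrow> continuous_on UNIV \<phi>"
proof -
  assume "smooth_fun \<phi>"
  then have "iterpd [] \<phi> differentiable_on UNIV" unfolding smooth_fun_def by blast
  then have "\<phi> differentiable_on UNIV" by simp
  then show ?thesis by (rule differentiable_imp_continuous_on)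
qed

lemma test_cont: "test_fun D \<phi> \<Longrightarrow> continuous_on UNIV \<phi>"
proof -
  assume "test_fun D \<phi>"
  then have "smooth_fun \<phi>" unfolding test_fun_def by simp
  then show ?thesis by (rule smooth_cont)
qed

lemma test_bdd:
  assumes "test_fun D \<phi>" shows "\<exists>B. \<forall>x. \<bar>\<phi> x\<bar> \<le> B"
proof -
  let ?K = "closure {x. \<phi> x \<noteq> 0}"
  have "compact ?K" using assms unfolding test_fun_def by blast
  moreover have "continuous_on ?K \<phi>" using continuous_on_subset[OF test_cont[OF assms] subset_UNIV] .
  ultimately have "compact (\<phi> ` ?K)" by (intro compact_continuous_image)
  then obtain B where B: "\<forall>y\<in>\<phi> ` ?K. norm y \<le> B" using compact_imp_bounded[of "\<phi> ` ?K"] unfolding bounded_iff by blast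
  have "\<bar>\<phi> x\<bar> \<le> max B 0" for x
  proof (cases "x \<in> ?K")
    case True then have "\<phi> x \<in> \<phi> ` ?K" by blast
    then have "norm (\<phi> x) \<le> B" using B by blast
    then show ?thesis by simp
  next
    case False then have "\<phi> x = 0" using closure_subset[of "{x. \<phi> x \<noteq> 0}"] by blast
    then show ?thesis by simp
  qed
  then show ?thesis by blast
qed

lemma cont_meas: "continuous_on UNIV (h::R3 \<Rightarrow> real) \<Longrightarrow> h \<in> borel_measurable lebesgue"
proof -
  assume "continuous_on UNIV h"
  then have "h \<in> borel_measurable borel" by (rule borel_measurable_continuous_onI)
  then have "h \<in> borel_measurable lborel" by simp
  then show ?thesis by (rule measurable_completion)
qed

lemma lin_at_top: "(c::real) > 0 \<Longrightarrow> filterlim (\<lambda>y::real. c * y) at_top at_top"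
  by (rule filterlim_tendsto_pos_mult_at_top[OF tendsto_const _ filterlim_ident])

lemma exp_neg_lin: "(c::real) > 0 \<Longrightarrow> ((\<lambda>y::real. exp (- (c * y))) \<longlongrightarrow> 0) at_top"
proof -
  assume c: "c > 0"
  have "filterlim (\<lambda>y. - (c * y)) at_bot at_top"
    using filterlim_uminus_at_top[THEN iffD1, OF lin_at_top[OF c]] .
  then show ?thesis by (rule filterlim_compose[OF exp_at_bot])
qed

lemma lin_exp: "(c::real) > 0 \<Longrightarrow> ((\<lambda>y::real. y * exp (- (c * y))) \<longlongrightarrow> 0) at_top"
proof -
  assume c: "c > 0"
  have "((\<lambda>x::real. x ^ 1 / exp x) \<longlongrightarrow> 0) at_top" by (rule tendsto_power_div_exp_0)
  then have "((\<lambda>y. (c * y) ^ 1 / exp (c * y)) \<longlongrightarrow> 0) at_top"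
    by (rule filterlim_compose[OF _ lin_at_top[OF c]])
  then have "((\<lambda>y. (1 / c) * ((c * y) ^ 1 / exp (c * y))) \<longlongrightarrow> 0) at_top"
    by (rule tendsto_mult_right_zero)
  moreover have "(\<lambda>y. y * exp (- (c * y))) = (\<lambda>y. (1 / c) * ((c * y) ^ 1 / exp (c * y)))"
    using c by (auto simp: fun_eq_iff exp_minus field_simps)
  ultimately show ?thesis by simp
qed

lemma polyexp_lim:
  fixes p :: "real poly"
  shows "c > 0 \<Longrightarrow> ((\<lambda>y. poly p y * exp (- (c * y))) \<longlongrightarrow> 0) at_top"
proof (induction p arbitrary: c rule: pCons_induct)
  case 0 then show ?case by simp
next
  case (pCons a p)
  have c2: "c / 2 > 0" using pCons.prems by simp
  have l1: "((\<lambda>y. a * exp (- (c * y))) \<longlongrightarrow> 0) at_top"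
    using tendsto_mult_right_zero[OF exp_neg_lin[OF pCons.prems], of a] .
  have l2: "((\<lambda>y::real. y * exp (- ((c/2) * y))) \<longlongrightarrow> 0) at_top"
    using lin_exp[OF c2] .
  have l3: "((\<lambda>y. (y * exp (- ((c/2) * y))) * (poly p y * exp (- ((c/2) * y)))) \<longlongrightarrow> 0) at_top"
    using tendsto_mult[OF l2 pCons.IH[OF c2]] by simp
  have eq: "poly (pCons a p) y * exp (- (c * y)) =
      a * exp (- (c * y)) + (y * exp (- ((c/2) * y))) * (poly p y * exp (- ((c/2) * y)))" for y
  proof -
    have "exp (- (c * y)) = exp (- ((c/2) * y)) * exp (- ((c/2) * y))"
      by (simp add: exp_add[symmetric])
    then show ?thesis by (simp add: algebra_simps)
  qed
  show ?case unfolding eq using tendsto_add[OF l1 l3] by simp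
qed

fun PP :: "nat \<Rightarrow> real poly" where
  "PP 0 = 1"
| "PP (Suc k) = monom 1 2 * (PP k - pderiv (PP k))"

definition Ek :: "nat \<Rightarrow> real \<Rightarrow> real" where
  "Ek k s = (if s \<le> 0 then 0 else poly (PP k) (inverse s) * exp (- inverse s))"

lemma Ek_pos_deriv:
  assumes "s > 0"
  shows "((\<lambda>s. poly (PP k) (inverse s) * exp (- inverse s)) has_real_derivative
           poly (PP (Suc k)) (inverse s) * exp (- inverse s)) (at s)"
proof -
  have d1: "((\<lambda>s. inverse s) has_real_derivative - (inverse s * inverse s)) (at s)"
    using assms DERIV_inverse[of s] by (simp add: power2_eq_square)
  have d2: "((\<lambda>s. poly (PP k) (inverse s)) has_real_derivative
        poly (pderiv (PP k)) (inverse s) * - (inverse s * inverse s)) (at s)"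
    by (rule DERIV_chain2[OF poly_DERIV d1])
  have d3: "((\<lambda>s. exp (- inverse s)) has_real_derivative
        exp (- inverse s) * (inverse s * inverse s)) (at s)"
    using DERIV_chain2[OF DERIV_exp DERIV_minus[OF d1]] by simp
  have "((\<lambda>s. poly (PP k) (inverse s) * exp (- inverse s)) has_real_derivative
     poly (pderiv (PP k)) (inverse s) * - (inverse s * inverse s) * exp (- inverse s)
     + exp (- inverse s) * (inverse s * inverse s) * poly (PP k) (inverse s)) (at s)"
    by (rule DERIV_mult[OF d2 d3])
  moreover have "poly (pderiv (PP k)) (inverse s) * - (inverse s * inverse s) * exp (- inverse s)
     + exp (- inverse s) * (inverse s * inverse s) * poly (PP k) (inverse s)
     = poly (PP (Suc k)) (inverse s) * exp (- inverse s)"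
    by (simp add: poly_monom algebra_simps power2_eq_square)
  ultimately show ?thesis by simp
qed

lemma Ek_deriv: "(Ek k has_real_derivative Ek (Suc k) s) (at s)"
proof (cases "s > 0")
  case True
  have ev: "eventually (\<lambda>t. Ek k t = poly (PP k) (inverse t) * exp (- inverse t)) (nhds s)"
    using eventually_gt_at_top True unfolding eventually_nhds_metric
    by (intro exI[of _ s]) (auto simp: Ek_def dist_real_def)
  show ?thesis
    using DERIV_cong_ev[OF refl ev refl, THEN iffD2, OF Ek_pos_deriv[OF True]] True
    by (simp add: Ek_def[abs_def] del: PP.simps)
next
  case False
  note nf = False
  show ?thesis
  proof (cases "s < 0")
    case True
    have ev: "eventually (\<lambda>t. Ek k t = 0) (nhds s)"
      unfolding eventually_nhds_metric using True
      by (intro exI[of _ "- s"]) (auto simp: Ek_def dist_real_def)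
    show ?thesis
      using DERIV_cong_ev[OF refl ev refl, THEN iffD2, OF DERIV_const] True
      by (simp add: Ek_def[abs_def] del: PP.simps)
  next
    case False
    then have s0: "s = 0" using nf by simp
    have "((\<lambda>y. (Ek k y - Ek k 0) / (y - 0)) \<longlongrightarrow> 0) (at 0)"
      unfolding filterlim_at_split
    proof
      have "eventually (\<lambda>y. 0 = (Ek k y - Ek k 0) / (y - 0)) (at_left (0::real))"
        using eventually_at_left_real[of "-1" "0::real", OF _] by (auto elim!: eventually_mono simp: Ek_def)
      then show "((\<lambda>y. (Ek k y - Ek k 0) / (y - 0)) \<longlongrightarrow> 0) (at_left 0)"
        by (rule Lim_transform_eventually[OF tendsto_const])
    next
      have l: "((\<lambda>y. poly (pCons 0 (PP k)) y * exp (- (1 * y))) \<longlongrightarrow> 0) at_top"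
        by (rule polyexp_lim) simp
      have "eventually (\<lambda>y. poly (pCons 0 (PP k)) y * exp (- (1 * y)) =
           (Ek k (inverse y) - Ek k 0) / (inverse y - 0)) at_top"
        using eventually_gt_at_top[of 0]
        by eventually_elim (auto simp: Ek_def divide_inverse)
      then have "((\<lambda>y. (Ek k (inverse y) - Ek k 0) / (inverse y - 0)) \<longlongrightarrow> 0) at_top"
        by (rule Lim_transform_eventually[OF l])
      then show "((\<lambda>y. (Ek k y - Ek k 0) / (y - 0)) \<longlongrightarrow> 0) (at_right 0)"
        unfolding filterlim_at_right_to_top .
    qed
    then show ?thesis using s0 by (simp add: has_field_derivative_iff Ek_def)
  qed
qed

lemma Ek_nonneg_bounds:
  shows "Ek 0 s \<ge> 0" "Ek 0 s \<le> 1" "Ek 1 s \<ge> 0" "Ek 1 s \<le> 4"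
    "s > 0 \<Longrightarrow> Ek 0 s > 0" "s \<le> 0 \<Longrightarrow> Ek 0 s = 0"
proof -
  have P1: "PP 1 = monom 1 2" "PP (Suc 0) = monom 1 2" by simp_all
  show "Ek 0 s \<ge> 0" "Ek 1 s \<ge> 0" "s > 0 \<Longrightarrow> Ek 0 s > 0" "s \<le> 0 \<Longrightarrow> Ek 0 s = 0"
    by (auto simp: Ek_def poly_monom simp del: PP.simps(2) simp add: P1)
  show "Ek 0 s \<le> 1" by (auto simp: Ek_def)
  show "Ek 1 s \<le> 4"
  proof (cases "s > 0")
    case True
    define y where "y = inverse s"
    have y: "y > 0" using True by (simp add: y_def)
    have "y / 2 < exp (y / 2)" using exp_gt_zero exp_ge_add_one_self[of "y/2"] by linarith
    then have "(y/2)^2 \<le> (exp (y/2))^2" using y by (intro power_mono) auto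
    then have "y^2 / 4 \<le> exp y" by (simp add: power2_eq_square exp_add[symmetric] field_simps)
    then have "y^2 \<le> 4 * exp y" by simp
    then have "y^2 * exp (- y) \<le> 4 * exp y * exp (-y)" by (intro mult_right_mono) auto
    also have "\<dots> = 4" by (simp add: exp_minus field_simps)
    finally show ?thesis using True by (simp add: Ek_def y_def[symmetric] poly_monom P1 del: PP.simps(2))
  qed (simp add: Ek_def)
qed

lemma D_meas: "open (D::R3 set) \<Longrightarrow> bounded D \<Longrightarrow> D \<in> sets lebesgue \<and> emeasure lebesgue D < \<infinity>"
proof -
  assume "open D" "bounded D"
  then have "D \<in> lmeasurable" by (intro lmeasurable_open)
  then show ?thesis using fmeasurableD[of D lebesgue] fmeasurableD2[of D lebesgue] by (simp add: less_top)
qed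

lemma si_meas: "set_integrable lebesgue D (g::R3 \<Rightarrow> real) \<Longrightarrow> (\<lambda>x. indicator D x * g x) \<in> borel_measurable lebesgue"
  unfolding set_integrable_def by (drule borel_measurable_integrable) simp

lemma si_sum:
  fixes f :: "'i \<Rightarrow> R3 \<Rightarrow> real"
  assumes "\<And>i. i \<in> I \<Longrightarrow> set_integrable lebesgue A (f i)"
  shows "set_integrable lebesgue A (\<lambda>x. \<Sum>i\<in>I. f i x) \<and>
    (LINT x:A|lebesgue. (\<Sum>i\<in>I. f i x)) = (\<Sum>i\<in>I. LINT x:A|lebesgue. f i x)"
proof -
  have eq: "(\<lambda>x. indicator A x *\<^sub>R (\<Sum>i\<in>I. f i x)) = (\<lambda>x. \<Sum>i\<in>I. indicator A x *\<^sub>R f i x)"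
    by (simp add: sum_distrib_left)
  have i: "\<And>i. i \<in> I \<Longrightarrow> integrable lebesgue (\<lambda>x. indicator A x *\<^sub>R f i x)"
    using assms unfolding set_integrable_def by blast
  show ?thesis unfolding set_integrable_def set_lebesgue_integral_def eq
    using Bochner_Integration.integral_sum[where I=I and M=lebesgue and f="\<lambda>i x. indicator A x *\<^sub>R f i x", OF i]
      Bochner_Integration.integrable_sum[where I=I and M=lebesgue and f="\<lambda>i x. indicator A x *\<^sub>R f i x", OF i] by simp
qed

lemma si_mult_bdd:
  fixes g h :: "R3 \<Rightarrow> real"
  assumes gi: "set_integrable lebesgue D g" and hm: "h \<in> borel_measurable lebesgue"
    and hb: "\<And>x. \<bar>h x\<bar> \<le> C"
  shows "set_integrable lebesgue D (\<lambda>x. g x * h x)"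
proof -
  have m: "(\<lambda>x. indicator D x * g x) \<in> borel_measurable lebesgue" by (rule si_meas[OF gi])
  have i: "integrable lebesgue (\<lambda>x. C * (indicator D x * g x))"
    using gi unfolding set_integrable_def by simp
  have m2: "(\<lambda>x. indicator D x *\<^sub>R (g x * h x)) \<in> borel_measurable lebesgue"
  proof -
    have "(\<lambda>x. (indicator D x * g x) * h x) \<in> borel_measurable lebesgue"
      using m hm by (rule borel_measurable_times)
    then show ?thesis by (simp add: mult.assoc)
  qed
  show ?thesis unfolding set_integrable_def
  proof (rule Bochner_Integration.integrable_bound[OF i m2], rule AE_I2)
    fix x
    have C0: "C \<ge> 0" using hb[of x] by linarith
    have "\<bar>indicator D x * g x\<bar> * \<bar>h x\<bar> \<le> \<bar>indicator D x * g x\<bar> * C"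
      using hb[of x] by (intro mult_left_mono) auto
    moreover have "\<bar>indicator D x * (g x * h x)\<bar> = \<bar>indicator D x * g x\<bar> * \<bar>h x\<bar>"
      by (simp add: abs_mult mult.assoc)
    moreover have "\<bar>C * (indicator D x * g x)\<bar> = \<bar>indicator D x * g x\<bar> * C"
      using C0 by (simp add: abs_mult mult.commute)
    ultimately show "norm (indicator D x *\<^sub>R (g x * h x)) \<le> norm (C * (indicator D x * g x))"
      by simp
  qed
qed

lemma si_bdd:
  fixes h :: "R3 \<Rightarrow> real"
  assumes "D \<in> sets lebesgue" "emeasure lebesgue D < \<infinity>"
    and hm: "h \<in> borel_measurable lebesgue" and hb: "\<And>x. \<bar>h x\<bar> \<le> C"
  shows "set_integrable lebesgue D h"
proof -
  have "set_integrable lebesgue D (\<lambda>x. 1::real)"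
    using assms(1,2) unfolding set_integrable_def by simp
  from si_mult_bdd[OF this hm hb] show ?thesis by simp
qed

lemma sq_lim: "(\<lambda>n. (a - b n)\<^sup>2) \<longlonglongrightarrow> 0 \<Longrightarrow> b \<longlonglongrightarrow> (a::real)"
proof -
  assume "(\<lambda>n. (a - b n)\<^sup>2) \<longlonglongrightarrow> 0"
  then have "(\<lambda>n. sqrt ((a - b n)\<^sup>2)) \<longlonglongrightarrow> sqrt 0" by (rule tendsto_real_sqrt)
  then have "(\<lambda>n. \<bar>b n - a\<bar>) \<longlonglongrightarrow> 0" by (simp add: abs_minus_commute)
  then have "(\<lambda>n. b n - a) \<longlonglongrightarrow> 0" by (simp add: tendsto_rabs_zero_iff)
  then have "(\<lambda>n. (b n - a) + a) \<longlonglongrightarrow> 0 + a" by (intro tendsto_add tendsto_const)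
  then show ?thesis by simp
qed

lemma core:
  fixes D :: "R3 set" and u :: "R3 \<Rightarrow> real" and Fk :: "nat \<Rightarrow> real \<Rightarrow> real"
    and g' :: "3 \<Rightarrow> R3 \<Rightarrow> real" and G :: "3 \<Rightarrow> 3 \<Rightarrow> R3 \<Rightarrow> real"
  assumes Dm: "D \<in> sets lebesgue" "emeasure lebesgue D < \<infinity>"
    and Fd: "\<And>k t. (Fk k has_real_derivative Fk (Suc k) t) (at t)"
    and F0: "Fk 0 0 = 0" and Fb: "\<And>t. \<bar>Fk 0 t\<bar> \<le> M"
    and F1: "\<And>t. 0 \<le> Fk (Suc 0) t" "\<And>t. Fk (Suc 0) t \<le> B"
    and H01u: "H01 D u"
    and gG: "\<And>i. weak_pd D i u (g' i)" "\<And>i j. weak_pd D j (g' i) (G i j)"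
  shows "set_integrable lebesgue D (\<lambda>x. (\<Sum>i\<in>UNIV. G i i x) * Fk 0 (u x)) \<and>
         (LINT x:D|lebesgue. (\<Sum>i\<in>UNIV. G i i x) * Fk 0 (u x)) \<le> 0"
proof -
  from H01u obtain g \<phi> where uL2: "L2 D u" and g: "\<And>i. L2 D (g i) \<and> weak_pd D i u (g i)"
    and \<phi>t: "\<And>n. test_fun D (\<phi> n)"
    and \<phi>u: "(\<lambda>n. LINT x:D|lebesgue. (u x - \<phi> n x)\<^sup>2) \<longlonglongrightarrow> 0"
    and \<phi>g: "\<And>i. (\<lambda>n. LINT x:D|lebesgue. (g i x - pd i (\<phi> n) x)\<^sup>2) \<longlonglongrightarrow> 0"
    unfolding H01_def by blast
  define H where "H x = (\<Sum>i\<in>UNIV. G i i x)" for x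
  have B0: "B \<ge> 0" using F1[of 0] by linarith
  have Fc: "continuous_on UNIV (Fk k)" for k
    using Fd DERIV_isCont continuous_at_imp_continuous_on by blast
  have Fm: "Fk k \<in> borel_measurable borel" for k by (rule borel_measurable_continuous_onI[OF Fc])
  have \<phi>s: "smooth_fun (\<phi> n)" for n using \<phi>t unfolding test_fun_def by blast
  have \<phi>m: "\<phi> n \<in> borel_measurable lebesgue" for n by (rule cont_meas[OF test_cont[OF \<phi>t]])
  have pm: "pd i (\<phi> n) \<in> borel_measurable lebesgue" for i n
    by (rule cont_meas[OF test_cont[OF test_pd[OF \<phi>t]]])
  have F\<phi>m: "(\<lambda>x. Fk k (\<phi> n x)) \<in> borel_measurable lebesgue" for k n
    using measurable_compose[OF \<phi>m Fm] .
  have Gi: "set_integrable lebesgue D (G i i)" for i using gG(2)[of i i] unfolding weak_pd_def by blast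
  have Hi: "set_integrable lebesgue D H" unfolding H_def[abs_def] using si_sum[of UNIV D "\<lambda>i. G i i"] Gi by blast
  have ui: "set_integrable lebesgue D u" using gG(1)[of 0] unfolding weak_pd_def by blast
  have gi: "set_integrable lebesgue D (g i)" for i using g[of i] unfolding weak_pd_def by blast
  have g2i: "set_integrable lebesgue D (\<lambda>x. (g i x)\<^sup>2)" for i using g[of i] unfolding L2_def by blast
  have u2i: "set_integrable lebesgue D (\<lambda>x. (u x)\<^sup>2)" using uL2 unfolding L2_def by blast

  have st1: "(LINT x:D|lebesgue. G i i x * Fk 0 (\<phi> n x)) =
      - (LINT x:D|lebesgue. g i x * (Fk (Suc 0) (\<phi> n x) * pd i (\<phi> n) x))" for i n
  proof -
    let ?\<chi> = "\<lambda>x. Fk 0 (\<phi> n x)"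
    have \<chi>t: "test_fun D ?\<chi>" by (rule test_comp[where Fk=Fk, OF \<phi>t Fd F0])
    have \<psi>t: "test_fun D (pd i ?\<chi>)" by (rule test_pd[OF \<chi>t])
    have pd\<chi>: "pd i ?\<chi> = (\<lambda>x. Fk (Suc 0) (\<phi> n x) * pd i (\<phi> n) x)"
      by (rule ext, rule pd_comp[where F="Fk 0" and F'="Fk (Suc 0)", OF \<phi>s Fd])
    have e1: "(LINT x:D|lebesgue. g' i x * pd i ?\<chi> x) = - (LINT x:D|lebesgue. G i i x * ?\<chi> x)"
      using gG(2)[of i i] \<chi>t unfolding weak_pd_def by blast
    have e2: "(LINT x:D|lebesgue. u x * pd i (pd i ?\<chi>) x) = - (LINT x:D|lebesgue. g' i x * pd i ?\<chi> x)"
      using gG(1)[of i] \<psi>t unfolding weak_pd_def by blast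
    have e3: "(LINT x:D|lebesgue. u x * pd i (pd i ?\<chi>) x) = - (LINT x:D|lebesgue. g i x * pd i ?\<chi> x)"
      using g[of i] \<psi>t unfolding weak_pd_def by blast
    show ?thesis using e1 e2 e3 unfolding pd\<chi> by linarith
  qed

  have st2: "- (LINT x:D|lebesgue. g i x * (Fk (Suc 0) (\<phi> n x) * pd i (\<phi> n) x))
      \<le> B / 2 * (LINT x:D|lebesgue. (g i x - pd i (\<phi> n) x)\<^sup>2)" for i n
  proof -
    let ?p = "pd i (\<phi> n)"
    let ?c = "\<lambda>x. Fk (Suc 0) (\<phi> n x)"
    obtain C where C: "\<And>x. \<bar>?p x\<bar> \<le> C" using test_bdd[OF test_pd[OF \<phi>t]] by blast
    have cpm: "(\<lambda>x. ?c x * ?p x) \<in> borel_measurable lebesgue"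
      using F\<phi>m pm by (rule borel_measurable_times)
    have cpb: "\<bar>?c x * ?p x\<bar> \<le> B * C" for x
    proof -
      have "\<bar>?c x\<bar> \<le> B" using F1[of "\<phi> n x"] by simp
      then show ?thesis unfolding abs_mult using C[of x] by (intro mult_mono) auto
    qed
    have i1: "set_integrable lebesgue D (\<lambda>x. g i x * (?c x * ?p x))"
      by (rule si_mult_bdd[OF gi cpm cpb])
    have igp: "set_integrable lebesgue D (\<lambda>x. g i x * ?p x)"
      by (rule si_mult_bdd[OF gi pm C])
    have p2m: "(\<lambda>x. (?p x)\<^sup>2) \<in> borel_measurable lebesgue" using pm by measurable
    have p2b: "\<bar>(?p x)\<^sup>2\<bar> \<le> C\<^sup>2" for x
      using power_mono[OF C[of x] abs_ge_zero, of 2] by simp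
    have ip2: "set_integrable lebesgue D (\<lambda>x. (?p x)\<^sup>2)" by (rule si_bdd[OF Dm p2m p2b])
    have eq: "(\<lambda>x. (g i x - ?p x)\<^sup>2) = (\<lambda>x. ((g i x)\<^sup>2 + (?p x)\<^sup>2) - 2 * (g i x * ?p x))"
      by (rule ext) (simp add: power2_diff)
    have i2: "set_integrable lebesgue D (\<lambda>x. (g i x - ?p x)\<^sup>2)"
      unfolding eq using g2i ip2 igp by (intro set_integral_diff set_integral_add set_integrable_mult_right) auto
    have i2': "set_integrable lebesgue D (\<lambda>x. B / 2 * (g i x - ?p x)\<^sup>2)"
      using i2 by (intro set_integrable_mult_right) auto
    have i1': "set_integrable lebesgue D (\<lambda>x. - (g i x * (?c x * ?p x)))"
      using set_integrable_mult_right[of "-1" lebesgue D, OF i1] by simp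
    have pw: "- (g i x * (?c x * ?p x)) \<le> B / 2 * (g i x - ?p x)\<^sup>2" for x
    proof -
      have a: "- (g i x * ?p x) \<le> (g i x - ?p x)\<^sup>2 / 2"
        by (simp add: power2_diff field_simps)
      have "- (g i x * (?c x * ?p x)) = ?c x * (- (g i x * ?p x))" by (simp add: algebra_simps)
      also have "\<dots> \<le> ?c x * ((g i x - ?p x)\<^sup>2 / 2)" using a F1(1) by (intro mult_left_mono) auto
      also have "\<dots> \<le> B * ((g i x - ?p x)\<^sup>2 / 2)" using F1(2) by (intro mult_right_mono) auto
      finally show ?thesis by simp
    qed
    have "(LINT x:D|lebesgue. - (g i x * (?c x * ?p x))) \<le> (LINT x:D|lebesgue. B / 2 * (g i x - ?p x)\<^sup>2)"
      by (rule set_integral_mono[OF i1' i2' pw])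
    then show ?thesis using set_integral_uminus[OF i1] by simp
  qed

  define a where "a n = (LINT x:D|lebesgue. H x * Fk 0 (\<phi> n x))" for n
  define b where "b n = (\<Sum>i\<in>UNIV. B / 2 * (LINT x:D|lebesgue. (g i x - pd i (\<phi> n) x)\<^sup>2))" for n
  have ab: "a n \<le> b n" for n
  proof -
    have GFi: "set_integrable lebesgue D (\<lambda>x. G i i x * Fk 0 (\<phi> n x))" for i
      by (rule si_mult_bdd[OF Gi F\<phi>m Fb])
    have "a n = (\<Sum>i\<in>UNIV. LINT x:D|lebesgue. G i i x * Fk 0 (\<phi> n x))"
      unfolding a_def H_def sum_distrib_right using si_sum[of UNIV D "\<lambda>i x. G i i x * Fk 0 (\<phi> n x)"] GFi
      by blast
    also have "\<dots> \<le> b n" unfolding b_def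
      by (rule sum_mono) (use st1 st2 in auto)
    finally show ?thesis .
  qed
  have b0: "b \<longlonglongrightarrow> 0"
  proof -
    have "(\<lambda>n. \<Sum>i\<in>UNIV. B / 2 * (LINT x:D|lebesgue. (g i x - pd i (\<phi> n) x)\<^sup>2)) \<longlonglongrightarrow> (\<Sum>i\<in>(UNIV::3 set). 0)"
      by (intro tendsto_sum tendsto_mult_right_zero \<phi>g)
    then show ?thesis unfolding b_def[abs_def] by simp
  qed

  define w where "w n x = indicator D x * (u x - \<phi> n x)\<^sup>2" for n x
  have wi: "integrable lebesgue (w n)" for n
  proof -
    obtain C where C: "\<And>x. \<bar>\<phi> n x\<bar> \<le> C" using test_bdd[OF \<phi>t] by blast
    have iu\<phi>: "set_integrable lebesgue D (\<lambda>x. u x * \<phi> n x)" by (rule si_mult_bdd[OF ui \<phi>m C])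
    have \<phi>2m: "(\<lambda>x. (\<phi> n x)\<^sup>2) \<in> borel_measurable lebesgue" using \<phi>m by measurable
    have \<phi>2b: "\<bar>(\<phi> n x)\<^sup>2\<bar> \<le> C\<^sup>2" for x
      using power_mono[OF C[of x] abs_ge_zero, of 2] by simp
    have i\<phi>2: "set_integrable lebesgue D (\<lambda>x. (\<phi> n x)\<^sup>2)" by (rule si_bdd[OF Dm \<phi>2m \<phi>2b])
    have eq: "(\<lambda>x. (u x - \<phi> n x)\<^sup>2) = (\<lambda>x. ((u x)\<^sup>2 + (\<phi> n x)\<^sup>2) - 2 * (u x * \<phi> n x))"
      by (rule ext) (simp add: power2_diff)
    have "set_integrable lebesgue D (\<lambda>x. (u x - \<phi> n x)\<^sup>2)"
      unfolding eq using u2i i\<phi>2 iu\<phi> by (intro set_integral_diff set_integral_add set_integrable_mult_right) auto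
    then show ?thesis unfolding set_integrable_def w_def[abs_def] by simp
  qed
  have wl: "(\<lambda>n. (\<integral>x. norm (w n x) \<partial>lebesgue)) \<longlonglongrightarrow> 0"
  proof -
    have "(\<integral>x. norm (w n x) \<partial>lebesgue) = (LINT x:D|lebesgue. (u x - \<phi> n x)\<^sup>2)" for n
      unfolding set_lebesgue_integral_def w_def by (intro Bochner_Integration.integral_cong) auto
    then show ?thesis using \<phi>u by simp
  qed
  obtain r :: "nat \<Rightarrow> nat" where r: "strict_mono r" and ae: "AE x in lebesgue. (\<lambda>n. w (r n) x) \<longlonglongrightarrow> 0"
    using tendsto_L1_AE_subseq[OF wi wl] by blast

  define s where "s n x = indicator D x * H x * Fk 0 (\<phi> (r n) x)" for n x
  define f where "f x = indicator D x * H x * Fk 0 (indicator D x * u x)" for x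
  have IHm: "(\<lambda>x. indicator D x * H x) \<in> borel_measurable lebesgue" by (rule si_meas[OF Hi])
  have IUm: "(\<lambda>x. indicator D x * u x) \<in> borel_measurable lebesgue" using uL2 unfolding L2_def by blast
  have fm: "f \<in> borel_measurable lebesgue" unfolding f_def[abs_def]
    using IHm measurable_compose[OF IUm Fm] by (rule borel_measurable_times)
  have sm: "s n \<in> borel_measurable lebesgue" for n unfolding s_def[abs_def]
    using IHm F\<phi>m by (rule borel_measurable_times)
  have wint: "integrable lebesgue (\<lambda>x. M * \<bar>indicator D x * H x\<bar>)"
    using Hi unfolding set_integrable_def by (intro integrable_mult_right integrable_abs) simp
  have lim: "AE x in lebesgue. (\<lambda>n. s n x) \<longlonglongrightarrow> f x"
    using ae
  proof (rule AE_mp, intro AE_I2 impI)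
    fix x assume wx: "(\<lambda>n. w (r n) x) \<longlonglongrightarrow> 0"
    show "(\<lambda>n. s n x) \<longlonglongrightarrow> f x"
    proof (cases "x \<in> D")
      case True
      then have "(\<lambda>n. (u x - \<phi> (r n) x)\<^sup>2) \<longlonglongrightarrow> 0" using wx unfolding w_def by simp
      then have "(\<lambda>n. \<phi> (r n) x) \<longlonglongrightarrow> u x" by (rule sq_lim)
      then have "(\<lambda>n. Fk 0 (\<phi> (r n) x)) \<longlonglongrightarrow> Fk 0 (u x)"
        by (rule isCont_tendsto_compose[OF DERIV_isCont[OF Fd]])
      then have "(\<lambda>n. H x * Fk 0 (\<phi> (r n) x)) \<longlonglongrightarrow> H x * Fk 0 (u x)"
        by (intro tendsto_mult tendsto_const)
      then show ?thesis using True unfolding s_def f_def by simp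
    next
      case False then show ?thesis unfolding s_def f_def by simp
    qed
  qed
  have bound: "AE x in lebesgue. norm (s n x) \<le> M * \<bar>indicator D x * H x\<bar>" for n
  proof (rule AE_I2)
    fix x
    have "\<bar>indicator D x * H x\<bar> * \<bar>Fk 0 (\<phi> (r n) x)\<bar> \<le> \<bar>indicator D x * H x\<bar> * M"
      using Fb by (intro mult_left_mono) auto
    then show "norm (s n x) \<le> M * \<bar>indicator D x * H x\<bar>"
      unfolding s_def by (simp add: abs_mult mult.commute)
  qed
  have fint: "integrable lebesgue f"
    by (rule integrable_dominated_convergence[OF fm sm wint lim bound])
  have flim: "(\<lambda>n. integral\<^sup>L lebesgue (s n)) \<longlonglongrightarrow> integral\<^sup>L lebesgue f"
    by (rule integral_dominated_convergence[OF fm sm wint lim bound])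
  have feq: "(\<lambda>x. indicator D x *\<^sub>R (H x * Fk 0 (u x))) = f"
    unfolding f_def by (rule ext) (simp split: split_indicator)
  have seq: "integral\<^sup>L lebesgue (s n) = a (r n)" for n
    unfolding a_def set_lebesgue_integral_def s_def by (simp add: mult.assoc)

  have I1: "set_integrable lebesgue D (\<lambda>x. H x * Fk 0 (u x))"
    unfolding set_integrable_def feq by (rule fint)
  have "(\<lambda>n. a (r n)) \<longlonglongrightarrow> integral\<^sup>L lebesgue f" using flim unfolding seq .
  moreover have "(\<lambda>n. b (r n)) \<longlonglongrightarrow> 0" using LIMSEQ_subseq_LIMSEQ[OF b0 r] by (simp add: o_def)
  ultimately have "integral\<^sup>L lebesgue f \<le> 0"
    by (rule LIMSEQ_le) (use ab in auto)
  then have "(LINT x:D|lebesgue. H x * Fk 0 (u x)) \<le> 0"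
    unfolding set_lebesgue_integral_def feq .
  then show ?thesis using I1 unfolding H_def by simp
qed

lemma final_step:
  fixes q :: "R3 \<Rightarrow> real"
  assumes "set_integrable lebesgue D q" "(LINT x:D|lebesgue. q x) \<le> 0"
    "AE x in lebesgue. x \<in> D \<longrightarrow> 0 \<le> q x"
  shows "AE x in lebesgue. x \<in> D \<longrightarrow> q x = 0"
proof -
  let ?h = "\<lambda>x. indicator D x * q x"
  have i: "integrable lebesgue ?h" using assms(1) unfolding set_integrable_def by simp
  have nn: "AE x in lebesgue. 0 \<le> ?h x"
    using assms(3) by eventually_elim (auto simp: indicator_def)
  have "integral\<^sup>L lebesgue ?h \<le> 0" using assms(2) unfolding set_lebesgue_integral_def by simp
  moreover have "0 \<le> integral\<^sup>L lebesgue ?h" by (rule integral_nonneg_AE[OF nn])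
  ultimately have "integral\<^sup>L lebesgue ?h = 0" by linarith
  then have "AE x in lebesgue. ?h x = 0" using integral_nonneg_eq_0_iff_AE[OF i nn] by simp
  then show ?thesis by eventually_elim (auto simp: indicator_def)
qed

theorem lemma2:
  fixes D :: "(real ^ 3) set" and k a :: real and f :: "real \<Rightarrow> real"
    and u :: "real ^ 3 \<Rightarrow> real"
  assumes "open D" and "connected D" and "D \<noteq> {}" and "bounded D"
    and "lipschitz_boundary D"
    and "k > 0" and "a \<ge> 0"
    and "continuous_on {v. \<bar>v\<bar> \<ge> a} f"
    and "bounded (f ` {-a..a})"
    and "\<exists>J. finite J \<and> J \<subseteq> {-a..a} \<and> continuous_on ({-a..a} - J) f \<and>
           (\<forall>v\<in>J. (\<exists>l. (f \<longlongrightarrow> l) (at_left v)) \<and> (\<exists>l. (f \<longlongrightarrow> l) (at_right v)))"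
    and "\<forall>v. \<bar>v\<bar> \<ge> a \<longrightarrow> v * f v \<ge> 0"
    and "H2 D u" and "H01 D u"
    and "solves_eq D k f u"
  shows "AE x in lebesgue. x \<in> D \<longrightarrow> \<bar>u x\<bar> \<le> a"
proof -
  note kpos = \<open>k > 0\<close> and a0 = \<open>a \<ge> 0\<close> and sgn = \<open>\<forall>v. \<bar>v\<bar> \<ge> a \<longrightarrow> v * f v \<ge> 0\<close>
  have Dm: "D \<in> sets lebesgue" "emeasure lebesgue D < \<infinity>"
    using D_meas[OF \<open>open D\<close> \<open>bounded D\<close>] by auto
  obtain g' G where gG: "\<And>i. weak_pd D i u (g' i)" "\<And>i j. weak_pd D j (g' i) (G i j)"
    and eqn: "AE x in lebesgue. x \<in> D \<longrightarrow> - (\<Sum>i\<in>UNIV. G i i x) + k\<^sup>2 * u x + f (u x) = 0"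
    using \<open>solves_eq D k f u\<close> unfolding solves_eq_def by blast
  define H where "H x = (\<Sum>i\<in>UNIV. G i i x)" for x
  have k2: "k\<^sup>2 > 0" using kpos by simp

  define Fk where "Fk j t = Ek j (t - a)" for j t
  have Fd: "(Fk j has_real_derivative Fk (Suc j) t) (at t)" for j t
  proof -
    have d: "((\<lambda>t. t - a) has_real_derivative 1) (at t)"
      by (auto intro!: derivative_eq_intros)
    have "((\<lambda>t. Ek j (t - a)) has_real_derivative Ek (Suc j) (t - a) * 1) (at t)"
      by (rule DERIV_chain2[OF Ek_deriv d])
    then show ?thesis unfolding Fk_def by simp
  qed
  have F0: "Fk 0 0 = 0" unfolding Fk_def using a0 Ek_nonneg_bounds(6) by simp
  have Fb: "\<bar>Fk 0 t\<bar> \<le> 1" for t unfolding Fk_def using Ek_nonneg_bounds(1,2) by simp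
  have F1: "0 \<le> Fk (Suc 0) t" "Fk (Suc 0) t \<le> 4" for t
    unfolding Fk_def using Ek_nonneg_bounds(3,4) by (simp_all add: One_nat_def)
  have cu: "set_integrable lebesgue D (\<lambda>x. H x * Fk 0 (u x)) \<and>
         (LINT x:D|lebesgue. H x * Fk 0 (u x)) \<le> 0"
    unfolding H_def by (rule core[OF Dm Fd F0 Fb F1 \<open>H01 D u\<close> gG])
  have "AE x in lebesgue. x \<in> D \<longrightarrow> H x * Fk 0 (u x) = 0"
  proof (rule final_step)
    show "AE x in lebesgue. x \<in> D \<longrightarrow> 0 \<le> H x * Fk 0 (u x)"
      using eqn
    proof eventually_elim
      case (elim x)
      show ?case
      proof
        assume xD: "x \<in> D"
        show "0 \<le> H x * Fk 0 (u x)"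
        proof (cases "u x > a")
          case True
          then have "f (u x) \<ge> 0" using sgn[rule_format, of "u x"] a0 by (simp add: zero_le_mult_iff)
          moreover have "k\<^sup>2 * u x > 0" using True a0 k2 by simp
          ultimately have "H x > 0" using elim xD unfolding H_def by linarith
          then show ?thesis unfolding Fk_def using Ek_nonneg_bounds(1) by simp
        next
          case False then show ?thesis unfolding Fk_def using Ek_nonneg_bounds(6) by simp
        qed
      qed
    qed
  qed (use cu in auto)
  then have up: "AE x in lebesgue. x \<in> D \<longrightarrow> u x \<le> a"
    using eqn
  proof eventually_elim
    case (elim x)
    show ?case
    proof
      assume xD: "x \<in> D"
      show "u x \<le> a"
      proof (rule ccontr)
        assume "\<not> u x \<le> a"
        then have True: "u x > a" by simp
        then have "f (u x) \<ge> 0" using sgn[rule_format, of "u x"] a0 by (simp add: zero_le_mult_iff)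
        moreover have "k\<^sup>2 * u x > 0" using True a0 k2 by simp
        ultimately have "H x > 0" using elim xD unfolding H_def by linarith
        moreover have "Fk 0 (u x) > 0" unfolding Fk_def using Ek_nonneg_bounds(5) True by simp
        ultimately have "H x * Fk 0 (u x) > 0" by simp
        then show False using elim xD by simp
      qed
    qed
  qed

  define Gk where "Gk j t = (-1) ^ (Suc j) * Ek j (- t - a)" for j t
  have Gd: "(Gk j has_real_derivative Gk (Suc j) t) (at t)" for j t
  proof -
    have d: "((\<lambda>t. - t - a) has_real_derivative -1) (at t)"
      by (auto intro!: derivative_eq_intros)
    have "((\<lambda>t. Ek j (- t - a)) has_real_derivative Ek (Suc j) (- t - a) * -1) (at t)"
      by (rule DERIV_chain2[OF Ek_deriv d])
    then have "((\<lambda>t. (-1) ^ (Suc j) * Ek j (- t - a)) has_real_derivative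
        (-1) ^ (Suc j) * (Ek (Suc j) (- t - a) * -1)) (at t)"
      by (rule DERIV_cmult)
    then show ?thesis unfolding Gk_def by simp
  qed
  have G0: "Gk 0 0 = 0" unfolding Gk_def using a0 Ek_nonneg_bounds(6) by simp
  have Gb: "\<bar>Gk 0 t\<bar> \<le> 1" for t unfolding Gk_def using Ek_nonneg_bounds(1,2) by simp
  have G1: "0 \<le> Gk (Suc 0) t" "Gk (Suc 0) t \<le> 4" for t
    unfolding Gk_def using Ek_nonneg_bounds(3,4) by (simp_all add: One_nat_def)
  have cl: "set_integrable lebesgue D (\<lambda>x. H x * Gk 0 (u x)) \<and>
         (LINT x:D|lebesgue. H x * Gk 0 (u x)) \<le> 0"
    unfolding H_def by (rule core[OF Dm Gd G0 Gb G1 \<open>H01 D u\<close> gG])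
  have "AE x in lebesgue. x \<in> D \<longrightarrow> H x * Gk 0 (u x) = 0"
  proof (rule final_step)
    show "AE x in lebesgue. x \<in> D \<longrightarrow> 0 \<le> H x * Gk 0 (u x)"
      using eqn
    proof eventually_elim
      case (elim x)
      show ?case
      proof
        assume xD: "x \<in> D"
        show "0 \<le> H x * Gk 0 (u x)"
        proof (cases "u x < - a")
          case True
          then have "f (u x) \<le> 0" using sgn[rule_format, of "u x"] a0 by (simp add: zero_le_mult_iff)
          moreover have "k\<^sup>2 * u x < 0" using True a0 k2 by (simp add: mult_pos_neg)
          ultimately have "H x < 0" using elim xD unfolding H_def by linarith
          then show ?thesis unfolding Gk_def using Ek_nonneg_bounds(1)[of "- u x - a"]
            by (simp add: mult_nonpos_nonneg)
        next
          case False then show ?thesis unfolding Gk_def using Ek_nonneg_bounds(6) by simp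
        qed
      qed
    qed
  qed (use cl in auto)
  then have low: "AE x in lebesgue. x \<in> D \<longrightarrow> - a \<le> u x"
    using eqn
  proof eventually_elim
    case (elim x)
    show ?case
    proof
      assume xD: "x \<in> D"
      show "- a \<le> u x"
      proof (rule ccontr)
        assume "\<not> - a \<le> u x"
        then have True: "u x < - a" by simp
        then have "f (u x) \<le> 0" using sgn[rule_format, of "u x"] a0 by (simp add: zero_le_mult_iff)
        moreover have "k\<^sup>2 * u x < 0" using True a0 k2 by (simp add: mult_pos_neg)
        ultimately have "H x < 0" using elim xD unfolding H_def by linarith
        moreover have "Ek 0 (- u x - a) > 0" using Ek_nonneg_bounds(5) True by simp
        ultimately have "H x * Gk 0 (u x) > 0" unfolding Gk_def by (simp add: mult_neg_pos)
        then show False using elim xD by simp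
      qed
    qed
  qed
  from up low show ?thesis by eventually_elim auto
qed

end
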